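(* Let $\mathscr{A}=\{A_1,\ldots,A_r\}$ be an irreducible set of real $d\times d$ matrices, $\|\cdot\|$ a norm on $\mathbb{R}^d$, and $p\ge d-1$ an integer. Suppose that for some nonzero $x_*\in\mathbb{R}^d$, some word $F\in\mathscr{A}_\infty$ and some $\nu>0$ we have $\|Fx_*\|\ge \nu\|x_*\|$. Then for every nonzero $x\in\mathbb{R}^d$ there is a word $G\in\mathscr{A}_p$ such that $F_x=FG\in\mathscr{A}_\infty$ satisfies $\mathrm{len}(F)\le\mathrm{len}(F_x)\le\mathrm{len}(F)+p$ and \[ \|F_x x\|\ge \nu\,\chi_p(\mathscr{A})\,\|x\|. \]
   Context: Irreducible: the matrices in $\mathscr{A}$ have no common invariant subspace other than $\{0\}$ and $\mathbb{R}^d$. $\mathscr{A}^k$ is the set of products of $k$ matrices from $\mathscr{A}$, $\mathscr{A}^0=\{I\}$. $\mathscr{A}_\infty=\bigcup_{k\ge1}\mathscr{A}^k$; elements are regarded as products $A_{i_q}\cdots A_{i_1}$ of factors from $\mathscr{A}$, and the number $q$ of factors is the length $\mathrm{len}$ (the identity $I\in\mathscr{A}^0$ has length $0$). $\mathscr{A}_p=\bigcup_{k=0}^p\mathscr{A}^k$, $\mathscr{A}_p(x)=\{Ax: A\in\mathscr{A}_p\}$. $\mathbf{S}(t)$ is the closed ball of radius $t$ about $0$ in $\|\cdot\|$. The $p$-measure of irreducibility is $\chi_p(\mathscr{A})=\inf_{\|x\|=1}\sup\{t\ge0:\mathbf{S}(t)\subseteq\mathrm{conv}(\mathscr{A}_p(x)\cup\mathscr{A}_p(-x))\}$.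 *)

theory Defs
  imports "HOL-Analysis.Analysis"
begin

definition is_norm :: "(real^'n \<Rightarrow> real) \<Rightarrow> bool" where
  "is_norm N \<longleftrightarrow> (\<forall>x y. N (x + y) \<le> N x + N y) \<and> (\<forall>c x. N (c *\<^sub>R x) = \<bar>c\<bar> * N x)
     \<and> (\<forall>x. N x = 0 \<longleftrightarrow> x = 0)"

definition irreducible_set :: "(real^'n^'n) set \<Rightarrow> bool" where
  "irreducible_set \<A> \<longleftrightarrow> (\<forall>V. subspace V \<and> (\<forall>A\<in>\<A>. \<forall>v\<in>V. A *v v \<in> V) \<longrightarrow> V = {0} \<or> V = UNIV)"

text \<open>A word [A_iq, ..., A_i1] denotes the product A_iq ** ... ** A_i1; its length is the
  length of the list; the empty word is the identity.\<close>
definition word_prod :: "(real^'n^'n) list \<Rightarrow> real^'n^'n" where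
  "word_prod ws = foldr (**) ws (mat 1)"

definition orbit_p :: "(real^'n^'n) set \<Rightarrow> nat \<Rightarrow> real^'n \<Rightarrow> (real^'n) set" where
  "orbit_p \<A> p x = {word_prod ws *v x | ws. set ws \<subseteq> \<A> \<and> length ws \<le> p}"

definition Sball :: "(real^'n \<Rightarrow> real) \<Rightarrow> real \<Rightarrow> (real^'n) set" where
  "Sball N t = {y. N y \<le> t}"

definition chi_p :: "(real^'n \<Rightarrow> real) \<Rightarrow> (real^'n^'n) set \<Rightarrow> nat \<Rightarrow> real" where
  "chi_p N \<A> p = (INF x\<in>{x. N x = 1}.
      Sup {t. t \<ge> 0 \<and> Sball N t \<subseteq> convex hull (orbit_p \<A> p x \<union> orbit_p \<A> p (- x))})"

end

theory Submission
  imports Defs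
begin

lemma norm_nonneg_N: assumes "is_norm N" shows "N x \<ge> 0"
proof -
  have "N (x + (- x)) \<le> N x + N (- x)" using assms unfolding is_norm_def by blast
  moreover have "N (- x) = N x" using assms unfolding is_norm_def
    by (metis abs_minus_cancel abs_one mult_1 scaleR_minus1_left)
  moreover have "N (x + (- x)) = 0" using assms unfolding is_norm_def by simp
  ultimately show ?thesis by linarith
qed

lemma norm_neg_N: assumes "is_norm N" shows "N (- x) = N x"
using assms unfolding is_norm_def
    by (metis abs_minus_cancel abs_one mult_1 scaleR_minus1_left)

lemma mv_neg: "(A::real^'a^'b) *v (- v) = - (A *v v)"
  by (metis matrix_vector_mult_scaleR scaleR_minus1_left)

lemma word_prod_append: "word_prod (F @ G) = word_prod F ** word_prod G"
  unfolding word_prod_def by (induction F) (auto simp: matrix_mul_assoc)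

lemma hull_bound:
  assumes "is_norm N" and "\<forall>k\<in>K. N (B *v k) \<le> c" and "u \<in> convex hull K"
  shows "N (B *v u) \<le> c"
proof -
  have cv: "convex {u. N (B *v u) \<le> c}"
    unfolding convex_def
  proof (clarify)
    fix x y and a b :: real
    assume h: "N (B *v x) \<le> c" "N (B *v y) \<le> c" "0 \<le> a" "0 \<le> b" "a + b = 1"
    have "B *v (a *\<^sub>R x + b *\<^sub>R y) = a *\<^sub>R (B *v x) + b *\<^sub>R (B *v y)"
      by (simp add: matrix_vector_right_distrib matrix_vector_mult_scaleR)
    hence "N (B *v (a *\<^sub>R x + b *\<^sub>R y)) \<le> N (a *\<^sub>R (B *v x)) + N (b *\<^sub>R (B *v y))"
      using assms(1) unfolding is_norm_def by metis
    also have "\<dots> = a * N (B *v x) + b * N (B *v y)"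
      using assms(1) h unfolding is_norm_def by simp
    also have "\<dots> \<le> a * c + b * c" using h by (intro add_mono mult_left_mono) auto
    also have "\<dots> = c" using h by (metis distrib_right mult_1)
    finally show "N (B *v (a *\<^sub>R x + b *\<^sub>R y)) \<le> c" .
  qed
  have "K \<subseteq> {u. N (B *v u) \<le> c}" using assms(2) by auto
  hence "convex hull K \<subseteq> {u. N (B *v u) \<le> c}" using cv by (rule hull_minimal)
  thus ?thesis using assms(3) by auto
qed

lemma L2:
  fixes \<A> :: "(real^'n^'n) set"
  assumes "is_norm N" "finite \<A>"
    and "Sball N t \<subseteq> convex hull (orbit_p \<A> p z \<union> orbit_p \<A> p (- z))" and "N u = t"
  shows "N (B *v u) \<le> Max ((\<lambda>G. N (B *v (word_prod G *v z))) ` {ws. set ws \<subseteq> \<A> \<and> length ws \<le> p})"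
proof -
  let ?W = "{ws. set ws \<subseteq> \<A> \<and> length ws \<le> p}"
  let ?M = "Max ((\<lambda>G. N (B *v (word_prod G *v z))) ` ?W)"
  have fin: "finite ?W" using assms(2) by (rule finite_lists_length_le)
  have "u \<in> convex hull (orbit_p \<A> p z \<union> orbit_p \<A> p (- z))"
    using assms(3,4) unfolding Sball_def by auto
  moreover have "\<forall>k\<in>orbit_p \<A> p z \<union> orbit_p \<A> p (- z). N (B *v k) \<le> ?M"
  proof
    fix k assume "k \<in> orbit_p \<A> p z \<union> orbit_p \<A> p (- z)"
    then obtain G where G: "G \<in> ?W" and k: "k = word_prod G *v z \<or> k = word_prod G *v (- z)"
      unfolding orbit_p_def by auto
    have "N (B *v k) = N (B *v (word_prod G *v z))"
      using k norm_neg_N[OF assms(1)] by (auto simp: mv_neg)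
    also have "\<dots> \<le> ?M" using fin G by (intro Max_ge) auto
    finally show "N (B *v k) \<le> ?M" .
  qed
  ultimately show ?thesis using hull_bound[OF assms(1)] by blast
qed

theorem lemma2:
  fixes \<A> :: "(real^'n^'n) set" and N :: "real^'n \<Rightarrow> real" and p :: nat
    and xs :: "real^'n" and F :: "(real^'n^'n) list" and \<nu> :: real
  assumes "finite \<A>" and "irreducible_set \<A>" and "is_norm N"
    and "p \<ge> CARD('n) - 1"
    and "xs \<noteq> 0" and "set F \<subseteq> \<A>" and "length F \<ge> 1" and "\<nu> > 0"
    and "N (word_prod F *v xs) \<ge> \<nu> * N xs"
  shows "\<forall>x. x \<noteq> 0 \<longrightarrow> (\<exists>G. set G \<subseteq> \<A> \<and> length G \<le> p \<and>
           length F \<le> length (F @ G) \<and> length (F @ G) \<le> length F + p \<and>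
           N (word_prod (F @ G) *v x) \<ge> \<nu> * chi_p N \<A> p * N x)"
proof (intro allI impI)
  fix x :: "real^'n" assume x0: "x \<noteq> 0"
  let ?W = "{ws. set ws \<subseteq> \<A> \<and> length ws \<le> p}"
  let ?T = "\<lambda>z. {t. t \<ge> 0 \<and> Sball N t \<subseteq> convex hull (orbit_p \<A> p z \<union> orbit_p \<A> p (- z))}"
  have fin: "finite ?W" using assms(1) by (rule finite_lists_length_le)
  have Wne: "[] \<in> ?W" by simp
  have Nxs: "N xs > 0" using assms(3,5) norm_nonneg_N[OF assms(3)] unfolding is_norm_def
    by (metis less_eq_real_def)
  have uex: "\<And>t. t \<ge> 0 \<Longrightarrow> N ((t / N xs) *\<^sub>R xs) = t"
    using assms(3,5) Nxs unfolding is_norm_def by simp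
  have T0: "0 \<in> ?T z" for z
  proof -
    have "Sball N 0 = {0}" using assms(3) norm_nonneg_N[OF assms(3)] unfolding Sball_def is_norm_def
      by (auto, metis order.antisym, metis order.refl)
    moreover have "z \<in> orbit_p \<A> p z" unfolding orbit_p_def
      by (rule CollectI, rule exI[of _ "[]"]) (simp add: word_prod_def)
    moreover have "- z \<in> orbit_p \<A> p (- z)" unfolding orbit_p_def
      by (rule CollectI, rule exI[of _ "[]"]) (simp add: word_prod_def)
    ultimately have "z \<in> convex hull (orbit_p \<A> p z \<union> orbit_p \<A> p (- z))"
       "- z \<in> convex hull (orbit_p \<A> p z \<union> orbit_p \<A> p (- z))"
      by (auto intro: hull_subset[THEN subsetD])
    hence "(1/2) *\<^sub>R z + (1/2) *\<^sub>R (- z) \<in> convex hull (orbit_p \<A> p z \<union> orbit_p \<A> p (- z))"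
      by (intro convexD[OF convex_convex_hull]) auto
    hence "0 \<in> convex hull (orbit_p \<A> p z \<union> orbit_p \<A> p (- z))" by simp
    with \<open>Sball N 0 = {0}\<close> show ?thesis by auto
  qed
  have Tbdd: "bdd_above (?T z)" for z
  proof
    fix t assume "t \<in> ?T z"
    hence "N (mat 1 *v ((t / N xs) *\<^sub>R xs)) \<le> Max ((\<lambda>G. N (mat 1 *v (word_prod G *v z))) ` ?W)"
      using L2[OF assms(3,1), where t=t and z=z and u="(t / N xs) *\<^sub>R xs" and B="mat 1"] uex by auto
    thus "t \<le> Max ((\<lambda>G. N (mat 1 *v (word_prod G *v z))) ` ?W)" using uex \<open>t \<in> ?T z\<close> by simp
  qed
  have Sup0: "Sup (?T z) \<ge> 0" for z using T0 Tbdd by (rule cSup_upper)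
  define y where "y = (1 / N x) *\<^sub>R x"
  have Nx: "N x > 0" using assms(3) x0 norm_nonneg_N[OF assms(3)] unfolding is_norm_def
    by (metis less_eq_real_def)
  have Ny: "N y = 1" using Nx x0 assms(3) unfolding y_def is_norm_def by simp
  have chi: "chi_p N \<A> p \<le> Sup (?T y)"
    unfolding chi_p_def
    by (rule cINF_lower) (use Ny Sup0 in \<open>auto intro!: bdd_belowI2[where m=0]\<close>)
  let ?f = "\<lambda>G. N (word_prod F *v (word_prod G *v y))"
  let ?M = "Max (?f ` ?W)"
  have "?M \<in> ?f ` ?W" using fin Wne by (intro Max_in) blast+
  then obtain G where G: "G \<in> ?W" and GM: "?f G = ?M" by auto
  have "\<nu> * t \<le> ?M" if "t \<in> ?T y" for t
  proof -
    have "\<nu> * t = (t / N xs) * (\<nu> * N xs)" using Nxs by simp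
    also have "\<dots> \<le> (t / N xs) * N (word_prod F *v xs)"
      using that Nxs assms(9) by (intro mult_left_mono) auto
    also have "\<dots> = N (word_prod F *v ((t / N xs) *\<^sub>R xs))"
      using assms(3) that Nxs unfolding is_norm_def by (simp add: matrix_vector_mult_scaleR)
    also have "\<dots> \<le> ?M" using L2[OF assms(3,1), of t p y "(t / N xs) *\<^sub>R xs"] uex that by auto
    finally show ?thesis .
  qed
  hence "Sup (?T y) \<le> ?M / \<nu>" using T0 assms(8)
    by (intro cSup_least) (auto simp: field_simps)
  hence "\<nu> * chi_p N \<A> p \<le> ?M" using chi assms(8)
    by (smt (verit, best) mult_left_mono pos_le_divide_eq mult.commute)
  moreover have "N (word_prod (F @ G) *v x) = N x * ?M"
  proof -
    have "x = N x *\<^sub>R y" using Nx unfolding y_def by simp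
    hence "word_prod (F @ G) *v x = N x *\<^sub>R (word_prod F *v (word_prod G *v y))"
      by (metis word_prod_append matrix_vector_mul_assoc matrix_vector_mult_scaleR)
    thus ?thesis using GM assms(3) Nx unfolding is_norm_def by simp
  qed
  ultimately have "N (word_prod (F @ G) *v x) \<ge> \<nu> * chi_p N \<A> p * N x"
    using Nx by (simp add: mult.commute mult_left_mono)
  thus "\<exists>G. set G \<subseteq> \<A> \<and> length G \<le> p \<and>
           length F \<le> length (F @ G) \<and> length (F @ G) \<le> length F + p \<and>
           N (word_prod (F @ G) *v x) \<ge> \<nu> * chi_p N \<A> p * N x"
    using G by auto
qed

end
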